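(* Let $T\subseteq\mathbb{R}^2$ be a closed convex set and let $R>r>0$. Then \[ \int_{D(R,r)\cap\partial T}\|x\|^{-1}\,\mathrm{d}x\le 4\pi\lceil\log_2(R/r)\rceil, \] where the integral is with respect to one-dimensional length measure.
   Context: $D(R,r)=R\mathbb{B}_2^2\setminus r\mathbb{B}_2^2$, where $\mathbb{B}_2^2$ is the closed Euclidean unit disk. $\partial T$ denotes the boundary of $T$ relative to the linear span of $T$. *)

theory Defs
  imports "HOL-Analysis.Analysis"
begin

definition annulus :: "real \<Rightarrow> real \<Rightarrow> (real^2) set" where
  "annulus R r = cball 0 R - cball 0 r"

definition span_boundary :: "(real^2) set \<Rightarrow> (real^2) set" where
  "span_boundary T = closure T - {x \<in> T. \<exists>e>0. ball x e \<inter> span T \<subseteq> T}"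

definition hausdorff1_delta :: "real \<Rightarrow> (real^2) set \<Rightarrow> ennreal" where
  "hausdorff1_delta \<delta> A =
     (INF C \<in> {C :: nat \<Rightarrow> (real^2) set. A \<subseteq> (\<Union>i. C i) \<and>
                (\<forall>i. bounded (C i) \<and> diameter (C i) \<le> \<delta>)}.
        (\<Sum>i. ennreal (diameter (C i))))"

text \<open>One-dimensional Hausdorff outer measure (normalised so that it is length).\<close>
definition hausdorff1_outer :: "(real^2) set \<Rightarrow> ennreal" where
  "hausdorff1_outer A = (SUP \<delta> \<in> {0<..}. hausdorff1_delta \<delta> A)"

definition hausdorff1 :: "(real^2) measure" where
  "hausdorff1 = measure_of UNIV (lambda_system UNIV UNIV hausdorff1_outer) hausdorff1_outer"

end

theory Submission
  imports Defs
begin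

lemma h1_delta_mono:
  assumes "A \<subseteq> B"
  shows "hausdorff1_delta d A \<le> hausdorff1_delta d B"
  unfolding hausdorff1_delta_def
  by (rule INF_superset_mono) (use assms in auto)

lemma h1_outer_mono:
  assumes "A \<subseteq> B"
  shows "hausdorff1_outer A \<le> hausdorff1_outer B"
  unfolding hausdorff1_outer_def
  by (rule SUP_mono) (use h1_delta_mono[OF assms] in blast)

lemma emeasure_h1_le: "emeasure hausdorff1 B \<le> hausdorff1_outer B"
  unfolding hausdorff1_def emeasure_measure_of_conv by auto

lemma space_h1: "space hausdorff1 = UNIV"
  unfolding hausdorff1_def space_measure_of_conv by simp

lemma h1_delta_lipschitz:
  fixes p :: "real^2 \<Rightarrow> real^2"
  assumes L: "\<And>x y. x \<in> S \<Longrightarrow> y \<in> S \<Longrightarrow> dist (p x) (p y) \<le> dist x y"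
  shows "hausdorff1_delta d (p ` S) \<le> hausdorff1_delta d S"
  unfolding hausdorff1_delta_def
proof (rule INF_greatest)
  fix C assume C: "C \<in> {C :: nat \<Rightarrow> (real^2) set. S \<subseteq> (\<Union>i. C i) \<and>
                (\<forall>i. bounded (C i) \<and> diameter (C i) \<le> d)}"
  define C' where "C' i = p ` (C i \<inter> S)" for i
  have diam: "diameter (C' i) \<le> diameter (C i)" and bd: "bounded (C' i)" for i
  proof -
    have *: "dist u v \<le> diameter (C i)" if uv: "u \<in> C' i" "v \<in> C' i" for u v
    proof -
      obtain a b where ab: "a \<in> C i" "a \<in> S" "b \<in> C i" "b \<in> S" "u = p a" "v = p b"
        using uv unfolding C'_def by blast
      have "dist u v \<le> dist a b" using L ab by auto
      also have "\<dots> \<le> diameter (C i)"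
        using C ab by (intro diameter_bounded_bound) auto
      finally show ?thesis .
    qed
    have d0: "0 \<le> diameter (C i)" using C diameter_ge_0 by blast
    show "diameter (C' i) \<le> diameter (C i)"
      by (rule diameter_le) (use * d0 in \<open>auto simp: dist_norm\<close>)
    show "bounded (C' i)"
    proof (cases "C' i = {}")
      case True then show ?thesis by simp
    next
      case False
      then obtain u where u: "u \<in> C' i" by auto
      have "C' i \<subseteq> cball u (diameter (C i))" using * u by auto
      then show ?thesis using bounded_cball bounded_subset by blast
    qed
  qed
  have cov: "C' \<in> {C :: nat \<Rightarrow> (real^2) set. p ` S \<subseteq> (\<Union>i. C i) \<and>
                (\<forall>i. bounded (C i) \<and> diameter (C i) \<le> d)}"
    using C diam bd unfolding C'_def by (fastforce intro: order_trans)
  have "(INF C \<in> {C :: nat \<Rightarrow> (real^2) set. p ` S \<subseteq> (\<Union>i. C i) \<and>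
                (\<forall>i. bounded (C i) \<and> diameter (C i) \<le> d)}.
        (\<Sum>i. ennreal (diameter (C i)))) \<le> (\<Sum>i. ennreal (diameter (C' i)))"
    by (rule INF_lower[OF cov])
  also have "\<dots> \<le> (\<Sum>i. ennreal (diameter (C i)))"
    by (intro suminf_le summableI) (use diam in \<open>auto intro: ennreal_leI\<close>)
  finally show "(INF C \<in> {C :: nat \<Rightarrow> (real^2) set. p ` S \<subseteq> (\<Union>i. C i) \<and>
                (\<forall>i. bounded (C i) \<and> diameter (C i) \<le> d)}.
        (\<Sum>i. ennreal (diameter (C i)))) \<le> (\<Sum>i. ennreal (diameter (C i)))" .
qed

lemma h1_outer_lipschitz:
  fixes p :: "real^2 \<Rightarrow> real^2"
  assumes L: "\<And>x y. x \<in> S \<Longrightarrow> y \<in> S \<Longrightarrow> dist (p x) (p y) \<le> dist x y"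
  shows "hausdorff1_outer (p ` S) \<le> hausdorff1_outer S"
  unfolding hausdorff1_outer_def
  by (rule SUP_mono) (use h1_delta_lipschitz[OF L] in blast)

lemma norm_2: "norm (x::real^2) = sqrt ((x$1)^2 + (x$2)^2)"
  by (simp add: norm_eq_sqrt_inner inner_vec_def sum_2 power2_eq_square)

definition circ :: "real \<Rightarrow> real \<Rightarrow> real^2" where
  "circ \<rho> t = vector [\<rho> * cos t, \<rho> * sin t]"

lemma trig_chord: "(cos (a::real) - cos b)^2 + (sin a - sin b)^2 = 4 * (sin ((a - b)/2))^2"
proof -
  have "(cos a - cos b)^2 + (sin a - sin b)^2 = 2 - 2 * cos (a - b)"
    by (simp add: cos_diff power2_eq_square algebra_simps)
  also have "cos (a - b) = 1 - 2 * (sin ((a - b)/2))^2"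
  proof -
    have "2 * ((a - b)/2) = a - b" by simp
    then show ?thesis using cos_double_sin[of "(a-b)/2"] by metis
  qed
  finally show ?thesis by simp
qed

lemma circ_dist:
  assumes "0 \<le> \<rho>"
  shows "dist (circ \<rho> a) (circ \<rho> b) \<le> \<rho> * \<bar>a - b\<bar>"
proof -
  have "dist (circ \<rho> a) (circ \<rho> b) = sqrt ((\<rho> * cos a - \<rho> * cos b)^2 + (\<rho> * sin a - \<rho> * sin b)^2)"
    unfolding dist_norm norm_2 circ_def by simp
  also have "\<dots> = sqrt (\<rho>^2 * ((cos a - cos b)^2 + (sin a - sin b)^2))"
    by (simp add: power_mult_distrib distrib_left flip: right_diff_distrib)
  also have "\<dots> = sqrt ((2 * \<rho> * sin ((a - b)/2))^2)"
    by (simp add: trig_chord power_mult_distrib)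
  also have "\<dots> = 2 * \<rho> * \<bar>sin ((a - b)/2)\<bar>"
    using assms by (simp add: abs_mult)
  also have "\<dots> \<le> 2 * \<rho> * \<bar>(a - b)/2\<bar>"
    using assms abs_sin_x_le_abs_x[of "(a-b)/2"] by (intro mult_left_mono) auto
  finally show ?thesis by simp
qed

lemma circ_norm: "0 \<le> \<rho> \<Longrightarrow> norm (circ \<rho> t) = \<rho>"
  by (simp add: norm_2 circ_def power_mult_distrib flip: distrib_left)

lemma circ_onto:
  assumes "0 < \<rho>" "norm (x::real^2) = \<rho>"
  obtains t where "0 \<le> t" "t < 2*pi" "x = circ \<rho> t"
proof -
  have "(x$1/\<rho>)^2 + (x$2/\<rho>)^2 = 1"
    using assms by (simp add: norm_2 power_divide add_divide_distrib[symmetric])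
       (metis real_sqrt_pow2 add_nonneg_nonneg zero_le_power2 power2_eq_square)
  then obtain t where t: "0 \<le> t" "t < 2*pi" "x$1/\<rho> = cos t" "x$2/\<rho> = sin t"
    by (rule sincos_total_2pi)
  have "x = circ \<rho> t"
    using t assms unfolding circ_def vec_eq_iff forall_2 by (auto simp: field_simps)
  with t show ?thesis using that by blast
qed

lemma h1_sphere:
  assumes "0 < \<rho>"
  shows "hausdorff1_outer (sphere 0 \<rho>) \<le> ennreal (2 * pi * \<rho>)"
  unfolding hausdorff1_outer_def
proof (rule SUP_least)
  fix d :: real assume "d \<in> {0<..}"
  then have d: "0 < d" by simp
  define m :: nat where "m = nat \<lceil>2 * pi * \<rho> / d\<rceil> + 1"
  have m0: "0 < m" unfolding m_def by simp
  have "2 * pi * \<rho> / d \<le> real m" unfolding m_def by linarith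
  then have "2 * pi * \<rho> \<le> real m * d" using d by (simp add: field_simps)
  then have md: "2 * pi * \<rho> / m \<le> d" using m0 by (simp add: field_simps)
  define C where "C i = (if i < m then circ \<rho> ` {2*pi*i/m .. 2*pi*(i+1)/m} else {})" for i
  have diam: "diameter (C i) \<le> 2 * pi * \<rho> / m" for i
  proof (rule diameter_le)
    show "C i \<noteq> {} \<or> 0 \<le> 2 * pi * \<rho> / m" using assms by simp
    fix u v assume uv: "u \<in> C i" "v \<in> C i"
    then obtain a b where ab: "a \<in> {2*pi*i/m .. 2*pi*(i+1)/m}" "b \<in> {2*pi*i/m .. 2*pi*(i+1)/m}"
      "u = circ \<rho> a" "v = circ \<rho> b"
      unfolding C_def by (auto split: if_splits)
    have "\<bar>a - b\<bar> \<le> 2*pi*(i+1)/m - 2*pi*i/m" using ab(1,2) by auto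
    also have "\<dots> = 2 * pi / m" by (simp add: diff_divide_distrib[symmetric] algebra_simps)
    finally have "\<rho> * \<bar>a - b\<bar> \<le> \<rho> * (2 * pi / m)"
      using assms by (intro mult_left_mono) auto
    then show "norm (u - v) \<le> 2 * pi * \<rho> / m"
    proof -
      have "\<rho> * (2 * pi / m) = 2 * pi * \<rho> / m" by simp
      moreover have "norm (u - v) \<le> \<rho> * \<bar>a - b\<bar>"
        using circ_dist[of \<rho> a b] assms ab by (simp add: dist_norm)
      ultimately show ?thesis using \<open>\<rho> * \<bar>a - b\<bar> \<le> \<rho> * (2 * pi / m)\<close> by linarith
    qed
  qed
  have bd: "bounded (C i)" for i
  proof -
    have "C i \<subseteq> cball 0 \<rho>" using assms circ_norm unfolding C_def by auto
    then show ?thesis using bounded_cball bounded_subset by blast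
  qed
  have cov: "sphere 0 \<rho> \<subseteq> (\<Union>i. C i)"
  proof
    fix x :: "real^2" assume "x \<in> sphere 0 \<rho>"
    then have "norm x = \<rho>" by simp
    then obtain t where t: "0 \<le> t" "t < 2*pi" "x = circ \<rho> t"
      using circ_onto assms by blast
    define i where "i = nat \<lfloor>t * m / (2*pi)\<rfloor>"
    have q0: "0 \<le> t * m / (2*pi)" using t by simp
    have ile: "real i \<le> t * m / (2*pi)" unfolding i_def using q0 by linarith
    have igt: "t * m / (2*pi) < real i + 1" unfolding i_def using q0 by linarith
    have "t * m / (2*pi) < m" using t m0 by (simp add: field_simps)
    then have "\<lfloor>t * m / (2*pi)\<rfloor> < int m" by (simp add: floor_less_iff)
    then have im: "i < m" unfolding i_def using q0 by (simp add: nat_less_iff)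
    have "2*pi*i/m \<le> t" using ile m0 by (simp add: field_simps)
    moreover have "t \<le> 2*pi*(i+1)/m" using igt m0 by (simp add: field_simps)
    ultimately have "x \<in> C i" unfolding C_def using im t by auto
    then show "x \<in> (\<Union>i. C i)" by blast
  qed
  have bdd: "\<forall>i. bounded (C i) \<and> diameter (C i) \<le> d"
    using bd diam md by (meson order_trans)
  have "hausdorff1_delta d (sphere 0 \<rho>) \<le> (\<Sum>i. ennreal (diameter (C i)))"
    unfolding hausdorff1_delta_def
    by (rule INF_lower) (use cov bdd in blast)
  also have "(\<Sum>i. ennreal (diameter (C i))) = (\<Sum>i<m. ennreal (diameter (C i)))"
    by (rule suminf_finite) (auto simp: C_def)
  also have "\<dots> \<le> (\<Sum>i<m. ennreal (2 * pi * \<rho> / m))"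
    by (intro sum_mono ennreal_leI diam)
  also have "\<dots> = ennreal (2 * pi * \<rho>)"
  proof -
    have "(\<Sum>i<m. ennreal (2 * pi * \<rho> / m)) = ennreal (\<Sum>i<m. 2 * pi * \<rho> / m)"
      using assms by (intro sum_ennreal) auto
    also have "(\<Sum>i<m. 2 * pi * \<rho> / m) = 2 * pi * \<rho>" using m0 by simp
    finally show ?thesis .
  qed
  finally show "hausdorff1_delta d (sphere 0 \<rho>) \<le> ennreal (2 * pi * \<rho>)" .
qed

lemma supp_frontier:
  fixes T :: "(real^2) set"
  assumes "convex T" "closed T" "y \<in> frontier T"
  obtains a where "a \<noteq> 0" "\<And>z. z \<in> T \<Longrightarrow> a \<bullet> z \<le> a \<bullet> y"
proof -
  have yT: "y \<in> T" using assms frontier_subset_closed by blast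
  show ?thesis
  proof (cases "y \<in> rel_interior T")
    case False
    then obtain a where "a \<noteq> 0" "\<And>z. z \<in> T \<Longrightarrow> a \<bullet> y \<le> a \<bullet> z"
      using supporting_hyperplane_rel_boundary[OF assms(1) yT] by metis
    then show ?thesis using that[of "-a"] by auto
  next
    case True
    have "interior T = {}"
    proof (rule ccontr)
      assume "interior T \<noteq> {}"
      then have "rel_interior T = interior T" by (rule rel_interior_nonempty_interior)
      then show False using True assms(3) by (auto simp: frontier_def)
    qed
    then obtain a b where ab: "a \<noteq> 0" "T \<subseteq> {x. a \<bullet> x = b}"
      using empty_interior_subset_hyperplane[OF assms(1)] by metis
    have "a \<bullet> z \<le> a \<bullet> y" if "z \<in> T" for z
    proof -
      have "a \<bullet> z = b" using ab(2) that by blast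
      moreover have "a \<bullet> y = b" using ab(2) yT by blast
      ultimately show ?thesis by simp
    qed
    then show ?thesis using that ab by blast
  qed
qed

lemma h1_frontier_ball:
  fixes T :: "(real^2) set"
  assumes "closed T" "convex T" "0 < \<rho>"
  shows "hausdorff1_outer (frontier T \<inter> cball 0 \<rho>) \<le> ennreal (2 * pi * \<rho>)"
proof -
  define K where "K = T \<inter> cball 0 \<rho>"
  have Kc: "convex K" "closed K" unfolding K_def using assms by (auto intro: convex_Int closed_Int)
  have sub: "frontier T \<inter> cball 0 \<rho> \<subseteq> closest_point K ` sphere 0 \<rho>"
  proof
    fix y assume y: "y \<in> frontier T \<inter> cball 0 \<rho>"
    have yT: "y \<in> T" using y assms frontier_subset_closed by blast
    have yK: "y \<in> K" using y yT unfolding K_def by auto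
    obtain a where a: "a \<noteq> 0" "\<And>z. z \<in> T \<Longrightarrow> a \<bullet> z \<le> a \<bullet> y"
      using supp_frontier[OF assms(2,1)] y by blast
    define u where "u = a /\<^sub>R norm a"
    have uu: "u \<bullet> u = 1" using a(1) unfolding u_def
      by (simp add: dot_square_norm power2_eq_square)
    have uz: "u \<bullet> z \<le> u \<bullet> y" if "z \<in> T" for z
      using a(2)[OF that] a(1) unfolding u_def by (simp add: divide_right_mono)
    define b where "b = y \<bullet> u"
    define c where "c = \<rho>^2 - norm y ^ 2"
    have c0: "0 \<le> c" unfolding c_def using y assms
      by (simp add: power_mono)
    define s where "s = sqrt (b^2 + c)"
    have s2: "s^2 = b^2 + c" unfolding s_def using c0 by simp
    have sb: "b \<le> s"
    proof -
      have "sqrt (b^2) \<le> sqrt (b^2 + c)" using c0 by (intro real_sqrt_le_mono) simp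
      then have "\<bar>b\<bar> \<le> s" by (simp add: s_def)
      then show ?thesis by linarith
    qed
    define t where "t = s - b"
    have t0: "0 \<le> t" using sb unfolding t_def by simp
    define x where "x = y + t *\<^sub>R u"
    have "norm x ^ 2 = norm y ^ 2 + 2 * t * b + t^2"
      unfolding x_def b_def power2_norm_eq_inner
      by (simp add: inner_add inner_commute uu algebra_simps power2_eq_square)
    also have "\<dots> = \<rho>^2" unfolding t_def using s2 unfolding c_def
      by (simp add: power2_eq_square algebra_simps)
    finally have "norm x = \<rho>" using assms power2_eq_imp_eq[of "norm x" \<rho>] by simp
    then have xs: "x \<in> sphere 0 \<rho>" by simp
    have "dist x y \<le> dist x z" if z: "z \<in> K" for z
    proof -
      have ip: "(x - y) \<bullet> (z - y) \<le> 0"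
      proof -
        have "(x - y) \<bullet> (z - y) = t * (u \<bullet> z - u \<bullet> y)"
          unfolding x_def by (simp add: inner_diff_right right_diff_distrib)
        moreover have "u \<bullet> z - u \<bullet> y \<le> 0" using uz z unfolding K_def by auto
        ultimately show ?thesis using t0 by (simp add: mult_nonneg_nonpos)
      qed
      have "(dist x z)^2 = (dist x y)^2 - 2 * ((x - y) \<bullet> (z - y)) + (norm (z - y))^2"
      proof -
        have "x - z = (x - y) - (z - y)" by simp
        then show ?thesis unfolding dist_norm power2_norm_eq_inner
          by (simp add: inner_diff_left inner_diff_right inner_commute algebra_simps)
      qed
      moreover have "0 \<le> (norm (z - y))^2" by simp
      ultimately have "(dist x y)^2 \<le> (dist x z)^2" using ip by linarith
      then show ?thesis by (rule power2_le_imp_le) simp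
    qed
    then have "y = closest_point K x"
      using closest_point_unique[OF Kc yK] by blast
    then show "y \<in> closest_point K ` sphere 0 \<rho>" using xs by blast
  qed
  show ?thesis
  proof (cases "frontier T \<inter> cball 0 \<rho> = {}")
    case True
    have "hausdorff1_outer (frontier T \<inter> cball 0 \<rho>) \<le> hausdorff1_outer (sphere 0 \<rho>)"
      using True by (intro h1_outer_mono) auto
    then show ?thesis using h1_sphere[OF assms(3)] by (rule order_trans)
  next
    case False
    then obtain y where "y \<in> frontier T" "y \<in> cball 0 \<rho>" by blast
    then have "y \<in> K" unfolding K_def using assms frontier_subset_closed by blast
    then have Kne: "K \<noteq> {}" by blast
    have "hausdorff1_outer (frontier T \<inter> cball 0 \<rho>) \<le> hausdorff1_outer (closest_point K ` sphere 0 \<rho>)"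
      by (rule h1_outer_mono[OF sub])
    also have "\<dots> \<le> hausdorff1_outer (sphere 0 \<rho>)"
      by (rule h1_outer_lipschitz) (rule closest_point_lipschitz[OF Kc Kne])
    also have "\<dots> \<le> ennreal (2 * pi * \<rho>)" by (rule h1_sphere[OF assms(3)])
    finally show ?thesis .
  qed
qed

lemma span_boundary_sub: "span_boundary T \<subseteq> frontier T"
proof
  fix x assume x: "x \<in> span_boundary T"
  then have xc: "x \<in> closure T" unfolding span_boundary_def by blast
  have "x \<notin> interior T"
  proof
    assume "x \<in> interior T"
    then obtain e where e: "e > 0" "ball x e \<subseteq> T" by (meson mem_interior)
    then have "x \<in> T" by (meson centre_in_ball subsetD)
    moreover have "ball x e \<inter> span T \<subseteq> T" using e by blast
    ultimately show False using x e unfolding span_boundary_def by blast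
  qed
  then show "x \<in> frontier T" using xc unfolding frontier_def by blast
qed

lemma choose_class:
  fixes y :: ennreal and c :: "nat \<Rightarrow> real"
  assumes "y \<le> ennreal (c 0)" "0 < N"
  obtains k where "k < N" "y \<le> ennreal (c k)" "k = N - 1 \<or> ennreal (c (k+1)) < y"
proof -
  define A where "A = {k. k \<le> N - 1 \<and> y \<le> ennreal (c k)}"
  have fA: "finite A" unfolding A_def by simp
  have "0 \<in> A" unfolding A_def using assms by simp
  then have neA: "A \<noteq> {}" by blast
  define k where "k = Max A"
  have kA: "k \<in> A" unfolding k_def using fA neA by (rule Max_in)
  have kmax: "j \<in> A \<Longrightarrow> j \<le> k" for j unfolding k_def using fA by simp
  show ?thesis
  proof (rule that)
    show "k < N" using kA assms(2) unfolding A_def by auto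
    show "y \<le> ennreal (c k)" using kA unfolding A_def by auto
    show "k = N - 1 \<or> ennreal (c (k+1)) < y"
    proof (cases "k = N - 1")
      case False
      then have "k + 1 \<le> N - 1" using kA unfolding A_def by auto
      then have "\<not> y \<le> ennreal (c (k+1))" using kmax[of "k+1"] unfolding A_def by auto
      then show ?thesis by (simp add: not_le)
    qed simp
  qed
qed

theorem lemma4p19:
  fixes T :: "(real^2) set" and R r :: real
  assumes "closed T" and "convex T" and "0 < r" and "r < R"
  shows "(\<integral>\<^sup>+ x \<in> annulus R r \<inter> span_boundary T. ennreal (1 / norm x) \<partial>hausdorff1)
           \<le> ennreal (4 * pi * real_of_int \<lceil>log 2 (R / r)\<rceil>)"
proof -
  define M where "M = hausdorff1"
  define S where "S = annulus R r \<inter> span_boundary T"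
  define F where "F x = ennreal (1 / norm x) * indicator S x" for x
  define n where "n = \<lceil>log 2 (R / r)\<rceil>"
  define N where "N = nat n"
  have Rr: "1 < R / r" using assms by simp
  have lpos: "0 < log 2 (R / r)" using Rr by simp
  have n1: "1 \<le> n" unfolding n_def using lpos by linarith
  have N0: "0 < N" unfolding N_def using n1 by simp
  have nN: "real_of_int n = real N" unfolding N_def using n1 by simp
  have "log 2 (R / r) \<le> real N" using nN unfolding n_def by linarith
  then have "R / r \<le> 2 powr real N" using Rr by (subst log_le_iff[symmetric]) auto
  then have RN: "R \<le> 2 ^ N * r" using assms by (simp add: powr_realpow field_simps)
  have Sx: "x \<in> frontier T \<and> r < norm x \<and> norm x \<le> R" if "x \<in> S" for x
    using that span_boundary_sub unfolding S_def annulus_def by auto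
  define c where "c k = 1 / (2 ^ k * r)" for k :: nat
  define Cls where "Cls k = {y::ennreal. 0 < y \<and> y \<le> ennreal (c k) \<and> (k = N - 1 \<or> ennreal (c (k+1)) < y)}" for k
  have spM: "space M = UNIV" unfolding M_def by (rule space_h1)
  have "integral\<^sup>N M F \<le> ennreal (4 * pi * real N)"
    unfolding nn_integral_def
  proof (rule SUP_least)
    fix g assume "g \<in> {g. simple_function M g \<and> g \<le> F}"
    then have g: "simple_function M g" "\<And>x. g x \<le> F x" by (auto simp: le_fun_def)
    define U where "U k = g -` Cls k \<inter> space M" for k
    have UM: "U k \<in> sets M" for k unfolding U_def by (rule simple_functionD(2)[OF g(1)])
    have gpos: "x \<in> S" "g x \<le> ennreal (1 / norm x)" if "0 < g x" for x
    proof -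
      show "x \<in> S"
      proof (rule ccontr)
        assume "x \<notin> S" then have "F x = 0" by (simp add: F_def)
        then show False using g(2)[of x] that by simp
      qed
      then show "g x \<le> ennreal (1 / norm x)" using g(2)[of x] by (simp add: F_def)
    qed
    have pw: "g x \<le> (\<Sum>k<N. ennreal (c k) * indicator (U k) x)" for x
    proof (cases "g x = 0")
      case False
      then have gp: "0 < g x" using not_gr_zero by blast
      have xS: "x \<in> S" and gle: "g x \<le> ennreal (1 / norm x)" using gpos[OF gp] by auto
      have "1 / norm x \<le> 1 / r" using Sx[OF xS] assms by (simp add: frac_le)
      then have "ennreal (1 / norm x) \<le> ennreal (c 0)" unfolding c_def by (intro ennreal_leI) simp
      with gle have "g x \<le> ennreal (c 0)" by (rule order_trans)
      then obtain k where k: "k < N" "g x \<le> ennreal (c k)" "k = N - 1 \<or> ennreal (c (k+1)) < g x"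
        using choose_class N0 by blast
      then have "x \<in> U k" using gp unfolding U_def Cls_def spM by auto
      then have "g x \<le> ennreal (c k) * indicator (U k) x" using k by simp
      also have "\<dots> \<le> (\<Sum>k<N. ennreal (c k) * indicator (U k) x)"
        by (rule member_le_sum) (use k in auto)
      finally show ?thesis .
    qed simp
    have Usub: "U k \<subseteq> frontier T \<inter> cball 0 (2 ^ (k+1) * r)" if "k < N" for k
    proof
      fix x assume "x \<in> U k"
      then have gx: "g x \<in> Cls k" unfolding U_def by simp
      then have gp: "0 < g x" unfolding Cls_def by simp
      have xS: "x \<in> S" and gle: "g x \<le> ennreal (1 / norm x)" using gpos[OF gp] by auto
      have "norm x \<le> 2 ^ (k+1) * r"
      proof (cases "k = N - 1")
        case True
        then have "k + 1 = N" using that by simp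
        then show ?thesis using Sx[OF xS] RN by simp
      next
        case False
        then have "ennreal (c (k+1)) < g x" using gx unfolding Cls_def by simp
        then have "ennreal (c (k+1)) < ennreal (1 / norm x)" using gle by (rule less_le_trans)
        then have "c (k+1) < 1 / norm x" using assms unfolding c_def
          by (subst (asm) ennreal_less_iff) auto
        then have "1 / (2 ^ (k+1) * r) < 1 / norm x" unfolding c_def .
        then have "inverse (2 ^ (k+1) * r) < inverse (norm x)" by (simp add: inverse_eq_divide)
        moreover have "0 < norm x" using Sx[OF xS] assms by linarith
        ultimately have "norm x < 2 ^ (k+1) * r" using assms by (subst (asm) inverse_less_iff_less) auto
        then show ?thesis by simp
      qed
      then show "x \<in> frontier T \<inter> cball 0 (2 ^ (k+1) * r)" using Sx[OF xS] by simp
    qed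
    have "integral\<^sup>S M g = integral\<^sup>N M g" by (rule nn_integral_eq_simple_integral[OF g(1), symmetric])
    also have "\<dots> \<le> (\<integral>\<^sup>+ x. (\<Sum>k<N. ennreal (c k) * indicator (U k) x) \<partial>M)"
      by (rule nn_integral_mono) (rule pw)
    also have "\<dots> = (\<Sum>k<N. \<integral>\<^sup>+ x. ennreal (c k) * indicator (U k) x \<partial>M)"
      by (rule nn_integral_sum) (use UM in simp)
    also have "\<dots> = (\<Sum>k<N. ennreal (c k) * emeasure M (U k))"
      by (rule sum.cong) (use UM nn_integral_cmult_indicator in auto)
    also have "\<dots> \<le> (\<Sum>k<N. ennreal (4 * pi))"
    proof (rule sum_mono)
      fix k assume "k \<in> {..<N}"
      then have kN: "k < N" by simp
      have "emeasure M (U k) \<le> hausdorff1_outer (U k)" unfolding M_def by (rule emeasure_h1_le)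
      also have "\<dots> \<le> hausdorff1_outer (frontier T \<inter> cball 0 (2 ^ (k+1) * r))"
        by (rule h1_outer_mono[OF Usub[OF kN]])
      also have "\<dots> \<le> ennreal (2 * pi * (2 ^ (k+1) * r))"
        by (rule h1_frontier_ball) (use assms in auto)
      finally have "ennreal (c k) * emeasure M (U k) \<le> ennreal (c k) * ennreal (2 * pi * (2 ^ (k+1) * r))"
        by (rule mult_left_mono) simp
      also have "\<dots> = ennreal (c k * (2 * pi * (2 ^ (k+1) * r)))"
        by (rule ennreal_mult[symmetric]) (use assms in \<open>auto simp: c_def\<close>)
      also have "c k * (2 * pi * (2 ^ (k+1) * r)) = 4 * pi"
        using assms unfolding c_def by (simp add: field_simps)
      finally show "ennreal (c k) * emeasure M (U k) \<le> ennreal (4 * pi)" .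
    qed
    also have "\<dots> = ennreal (4 * pi * real N)"
    proof -
      have "(\<Sum>k<N. ennreal (4 * pi)) = ennreal (\<Sum>k<N. 4 * pi)" by (rule sum_ennreal) simp
      also have "(\<Sum>k<N. 4 * pi) = 4 * pi * real N" by simp
      finally show ?thesis .
    qed
    finally show "integral\<^sup>S M g \<le> ennreal (4 * pi * real N)" .
  qed
  then show ?thesis unfolding M_def F_def S_def n_def[symmetric] nN .
qed

end
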